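(* Under the hypotheses of the preceding theorem (weighted species $\mathcal{F}^\upsilon,\mathcal{G}^\gamma$ with $\mathcal{G}^\gamma(z)=\sum_ia_iz^i$ of radius of convergence $0$, $\mathcal{F}^\upsilon(z)$ of positive radius of convergence, $a_i=0$ unless $i\equiv1\pmod d$ for some $d\ge1$, $a_i>0$ for all $i\ge I$ with $i\equiv 1\pmod d$, and $\sum_{i_1+\dots+i_k=n,\ 1\le i_j<n-(k-1)}a_{i_1}\cdots a_{i_k}=o(a_{n-(k-1)})$ for every $k\ge2$), assume additionally that $[z^1]\mathcal{F}^\upsilon(z)>0$ and $a_1,a_2>0$. Then the random composite structure $\mathsf{S}_n$ drawn from $(\mathcal{F}^\upsilon\circ\mathcal{G}^\gamma)[[n]]$ with probability proportional to its weight consists of a single component with probability tending to $1$ as $n\to\infty$.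
   Context: A weighted species $\mathcal{F}^\upsilon$ assigns to each finite set $U$ a finite set $\mathcal{F}[U]$, functorial transport bijections, and relabelling-invariant weights $\upsilon\ge0$; $\mathcal{F}^\upsilon(z)=\sum_n|\mathcal{F}[n]|_\upsilon z^n/n!$ with $|\mathcal{F}[n]|_\upsilon$ the total weight of $\mathcal{F}[\{1,\dots,n\}]$. The composition $\mathcal{F}\circ\mathcal{G}$ (for $\mathcal{G}[\emptyset]=\emptyset$) has structures $(\pi,F,(G_Q)_{Q\in\pi})$ on $U$, with $\pi$ a partition of $U$ into non-empty blocks, $F\in\mathcal{F}[\pi]$, $G_Q\in\mathcal{G}[Q]$, weight $\upsilon(F)\prod_Q\gamma(G_Q)$; the $G_Q$ are its components. *)

theory Defs
  imports "HOL-Analysis.Analysis" "HOL-Library.Disjoint_Sets" "HOL-Library.FuncSet"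
    "HOL-Library.Landau_Symbols"
begin

text \<open>A weighted species with labels drawn from nat: S U is the finite set of structures
on a finite label set U, w U x the (nonnegative) weight of structure x in S U, and
T sigma U the transport of structures along a bijection sigma : U -> V.\<close>

definition weighted_species ::
  "(nat set \<Rightarrow> 'b set) \<Rightarrow> (nat set \<Rightarrow> 'b \<Rightarrow> real) \<Rightarrow> ((nat \<Rightarrow> nat) \<Rightarrow> nat set \<Rightarrow> 'b \<Rightarrow> 'b) \<Rightarrow> bool"
where
  "weighted_species S w T \<longleftrightarrow>
     (\<forall>U. finite U \<longrightarrow> finite (S U)) \<and>
     (\<forall>U x. finite U \<longrightarrow> x \<in> S U \<longrightarrow> 0 \<le> w U x) \<and>
     (\<forall>U V \<sigma>. finite U \<longrightarrow> bij_betw \<sigma> U V \<longrightarrow>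
         bij_betw (T \<sigma> U) (S U) (S V) \<and> (\<forall>x\<in>S U. w V (T \<sigma> U x) = w U x)) \<and>
     (\<forall>U \<sigma> \<sigma>' x. finite U \<longrightarrow> (\<forall>u\<in>U. \<sigma> u = \<sigma>' u) \<longrightarrow> x \<in> S U \<longrightarrow> T \<sigma> U x = T \<sigma>' U x) \<and>
     (\<forall>U x. finite U \<longrightarrow> x \<in> S U \<longrightarrow> T id U x = x) \<and>
     (\<forall>U V W \<sigma> \<tau> x. finite U \<longrightarrow> bij_betw \<sigma> U V \<longrightarrow> bij_betw \<tau> V W \<longrightarrow> x \<in> S U \<longrightarrow>
         T (\<tau> \<circ> \<sigma>) U x = T \<tau> V (T \<sigma> U x))"

definition total_weight :: "(nat set \<Rightarrow> 'b set) \<Rightarrow> (nat set \<Rightarrow> 'b \<Rightarrow> real) \<Rightarrow> nat \<Rightarrow> real" where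
  "total_weight S w n = (\<Sum>x\<in>S {1..n}. w {1..n} x)"

definition egf_coeff :: "(nat set \<Rightarrow> 'b set) \<Rightarrow> (nat set \<Rightarrow> 'b \<Rightarrow> real) \<Rightarrow> nat \<Rightarrow> real" where
  "egf_coeff S w n = total_weight S w n / fact n"

text \<open>Composite structures of F o G on [n]: a partition pi of [n] into nonempty blocks,
an F-structure on the set of blocks (identified with {1..|pi|}, blocks labelled in any fixed
way; relabelling invariance makes the choice irrelevant), and a G-structure on each block.\<close>
definition comp_structs ::
  "(nat set \<Rightarrow> 'b set) \<Rightarrow> (nat set \<Rightarrow> 'c set) \<Rightarrow> nat \<Rightarrow> (nat set set \<times> 'b \<times> (nat set \<Rightarrow> 'c)) set"
where
  "comp_structs SF SG n =
     {(\<pi>, f, g). partition_on {1..n} \<pi> \<and> f \<in> SF {1..card \<pi>} \<and> g \<in> (\<Pi>\<^sub>E Q\<in>\<pi>. SG Q)}"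

definition comp_weight ::
  "(nat set \<Rightarrow> 'b \<Rightarrow> real) \<Rightarrow> (nat set \<Rightarrow> 'c \<Rightarrow> real) \<Rightarrow> (nat set set \<times> 'b \<times> (nat set \<Rightarrow> 'c)) \<Rightarrow> real"
where
  "comp_weight wF wG s = (case s of (\<pi>, f, g) \<Rightarrow> wF {1..card \<pi>} f * (\<Prod>Q\<in>\<pi>. wG Q (g Q)))"

definition prob_single_component ::
  "(nat set \<Rightarrow> 'b set) \<Rightarrow> (nat set \<Rightarrow> 'b \<Rightarrow> real) \<Rightarrow> (nat set \<Rightarrow> 'c set) \<Rightarrow> (nat set \<Rightarrow> 'c \<Rightarrow> real) \<Rightarrow> nat \<Rightarrow> real"
where
  "prob_single_component SF wF SG wG n =
     (\<Sum>s\<in>{s\<in>comp_structs SF SG n. card (fst s) = 1}. comp_weight wF wG s)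
     / (\<Sum>s\<in>comp_structs SF SG n. comp_weight wF wG s)"

end

theory Submission
  imports Defs "HOL-Computational_Algebra.Formal_Power_Series"
begin


definition parts :: "nat set \<Rightarrow> nat \<Rightarrow> nat set set set" where
  "parts U k = {\<pi>. partition_on U \<pi> \<and> card \<pi> = k}"

definition PW :: "(nat \<Rightarrow> real) \<Rightarrow> nat set \<Rightarrow> nat \<Rightarrow> real" where
  "PW t U k = (\<Sum>\<pi>\<in>parts U k. \<Prod>Q\<in>\<pi>. t (card Q))"

lemma finite_parts: "finite U \<Longrightarrow> finite (parts U k)"
  unfolding parts_def by (rule finite_subset[OF _ finitely_many_partition_on]) auto

lemma parts_zero: assumes "finite U" shows "parts U 0 = (if U = {} then {{}} else {})"
proof -
  have "partition_on U \<pi> \<and> card \<pi> = 0 \<longleftrightarrow> U = {} \<and> \<pi> = {}" for \<pi>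
  proof
    assume h: "partition_on U \<pi> \<and> card \<pi> = 0"
    then have "finite \<pi>" using finite_elements assms by blast
    with h have "\<pi> = {}" by simp
    with h show "U = {} \<and> \<pi> = {}" by (auto simp: partition_on_def)
  qed (auto simp: partition_on_empty)
  then show ?thesis unfolding parts_def by auto
qed

lemma PW_zero: "finite U \<Longrightarrow> PW t U 0 = (if U = {} then 1 else 0)"
  by (simp add: PW_def parts_zero)

lemma PW_empty_Suc: "PW t {} (Suc k) = 0"
  by (simp add: PW_def parts_def partition_on_empty)

lemma PW_insert:
  assumes U: "finite U" and x: "x \<notin> U"
  shows "PW t (insert x U) (Suc k) = (\<Sum>S\<in>Pow U. t (Suc (card S)) * PW t (U - S) k)"
proof -
  let ?A = "Sigma (Pow U) (\<lambda>S. parts (U - S) k)"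
  let ?h = "\<lambda>(S, \<pi>). insert (insert x S) \<pi>"
  have keyins: "insert x S \<notin> \<pi>" "disjnt (insert x S) (\<Union>\<pi>)" if "S \<subseteq> U" "partition_on (U - S) \<pi>" for S \<pi>
  proof -
    have "\<Union>\<pi> = U - S" using that partition_onD1 by blast
    then show "insert x S \<notin> \<pi>" "disjnt (insert x S) (\<Union>\<pi>)" using x by (auto simp: disjnt_def)
  qed
  have inj: "inj_on ?h ?A"
  proof (rule inj_onI, clarify)
    fix S \<pi> S' \<pi>'
    assume S: "S \<subseteq> U" "\<pi> \<in> parts (U - S) k" and S': "S' \<subseteq> U" "\<pi>' \<in> parts (U - S') k"
      and eq: "insert (insert x S) \<pi> = insert (insert x S') \<pi>'"
    have p: "partition_on (U - S) \<pi>" "partition_on (U - S') \<pi>'" using S S' by (auto simp: parts_def)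
    have n1: "insert x S \<notin> \<pi>" "insert x S' \<notin> \<pi>'" using keyins p S S' by auto
    have "insert x S \<in> insert (insert x S') \<pi>'" using eq by blast
    moreover have "insert x S \<notin> \<pi>'"
    proof
      assume "insert x S \<in> \<pi>'"
      then have "x \<in> \<Union>\<pi>'" by blast
      then show False using partition_onD1[OF p(2)] x by auto
    qed
    ultimately have B: "insert x S = insert x S'" by blast
    then have "S = S'" using S S' x by (metis Diff_insert_absorb subset_iff)
    moreover have "\<pi> = \<pi>'"
    proof -
      have "\<pi> = insert (insert x S) \<pi> - {insert x S}" using n1 by auto
      also have "\<dots> = insert (insert x S') \<pi>' - {insert x S'}" using eq B by simp
      also have "\<dots> = \<pi>'" using n1 by auto
      finally show ?thesis .
    qed
    ultimately show "S = S' \<and> \<pi> = \<pi>'" by simp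
  qed
  have img: "?h ` ?A = parts (insert x U) (Suc k)"
  proof
    show "?h ` ?A \<subseteq> parts (insert x U) (Suc k)"
    proof clarify
      fix S \<pi> assume S: "S \<subseteq> U" "\<pi> \<in> parts (U - S) k"
      have p: "partition_on (U - S) \<pi>" and c: "card \<pi> = k" using S by (auto simp: parts_def)
      have fin: "finite \<pi>" using finite_elements[OF _ p] U by simp
      have "partition_on (insert x U) (insert (insert x S) \<pi>)"
        using partition_on_insert[OF keyins(2)[OF S(1) p]] p S(1) x
        by (simp add: insert_Diff_if) (metis Diff_insert2 Diff_insert_absorb insert_Diff1 insert_subset subset_insertI2)
      moreover have "card (insert (insert x S) \<pi>) = Suc k" using fin c keyins(1)[OF S(1) p] by simp
      ultimately show "insert (insert x S) \<pi> \<in> parts (insert x U) (Suc k)" by (simp add: parts_def)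
    qed
  next
    show "parts (insert x U) (Suc k) \<subseteq> ?h ` ?A"
    proof
      fix \<pi> assume "\<pi> \<in> parts (insert x U) (Suc k)"
      then have p: "partition_on (insert x U) \<pi>" and c: "card \<pi> = Suc k" by (auto simp: parts_def)
      have fin: "finite \<pi>" using finite_elements[OF _ p] U by simp
      obtain B where B: "B \<in> \<pi>" "x \<in> B" using partition_onD1[OF p] by blast
      define \<pi>0 where "\<pi>0 = \<pi> - {B}"
      have pi: "\<pi> = insert B \<pi>0" using B \<pi>0_def by auto
      have dj: "disjnt B (\<Union>\<pi>0)"
        using partition_onD2[OF p] B unfolding \<pi>0_def disjoint_def disjnt_def by blast
      have p2: "partition_on (insert x U - B) \<pi>0" "B \<subseteq> insert x U"
        using partition_on_insert[OF dj] p pi by auto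
      have SU: "B - {x} \<subseteq> U" using p2(2) by auto
      have eqs: "insert x U - B = U - (B - {x})" using B x by auto
      have "card \<pi>0 = k" using fin c B \<pi>0_def by simp
      then have "(B - {x}, \<pi>0) \<in> ?A" using SU p2(1) eqs by (simp add: parts_def)
      moreover have "\<pi> = ?h (B - {x}, \<pi>0)" using pi B by (simp add: insert_absorb)
      ultimately show "\<pi> \<in> ?h ` ?A" by blast
    qed
  qed
  have "PW t (insert x U) (Suc k) = (\<Sum>\<pi>\<in>?h ` ?A. \<Prod>Q\<in>\<pi>. t (card Q))"
    unfolding PW_def img ..
  also have "\<dots> = (\<Sum>p\<in>?A. \<Prod>Q\<in>?h p. t (card Q))"
    by (rule sum.reindex[OF inj, unfolded comp_def])
  also have "\<dots> = (\<Sum>S\<in>Pow U. \<Sum>\<pi>\<in>parts (U - S) k. \<Prod>Q\<in>insert (insert x S) \<pi>. t (card Q))"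
    by (subst sum.Sigma) (auto simp: U finite_parts split_def intro!: sum.cong)
  also have "\<dots> = (\<Sum>S\<in>Pow U. t (Suc (card S)) * PW t (U - S) k)"
    unfolding PW_def sum_distrib_left
  proof (rule sum.cong[OF refl], rule sum.cong[OF refl])
    fix S \<pi> assume S: "S \<in> Pow U" and "\<pi> \<in> parts (U - S) k"
    then have p: "partition_on (U - S) \<pi>" by (simp add: parts_def)
    have fin: "finite \<pi>" using finite_elements[OF _ p] U by simp
    have "finite S" using S U finite_subset by auto
    then have "card (insert x S) = Suc (card S)" using S x by (metis PowD card_insert_disjoint subsetD)
    then show "(\<Prod>Q\<in>insert (insert x S) \<pi>. t (card Q)) = t (Suc (card S)) * (\<Prod>Q\<in>\<pi>. t (card Q))"
      using keyins(1)[of S \<pi>] S p fin by simp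
  qed
  finally show ?thesis .
qed
lemma sum_Pow_card:
  assumes "finite U"
  shows "(\<Sum>S\<in>Pow U. (\<phi>::nat\<Rightarrow>real) (card S)) = (\<Sum>i\<le>card U. of_nat (card U choose i) * \<phi> i)"
proof -
  have "(\<Sum>S\<in>Pow U. \<phi> (card S)) = (\<Sum>i\<le>card U. \<Sum>S\<in>{S\<in>Pow U. card S = i}. \<phi> (card S))"
    by (rule sum.group[symmetric]) (auto simp: assms card_mono)
  also have "\<dots> = (\<Sum>i\<le>card U. of_nat (card U choose i) * \<phi> i)"
  proof (rule sum.cong[OF refl])
    fix i
    have "{S\<in>Pow U. card S = i} = {B. B \<subseteq> U \<and> card B = i}" by auto
    then have "card {S\<in>Pow U. card S = i} = card U choose i" using n_subsets[OF assms] by simp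
    then show "(\<Sum>S\<in>{S\<in>Pow U. card S = i}. \<phi> (card S)) = of_nat (card U choose i) * \<phi> i"
      by simp
  qed
  finally show ?thesis .
qed

lemma deriv_id:
  fixes G :: "real fps"
  shows "of_nat (Suc m) * fps_nth (G^Suc j) (Suc m) =
    of_nat (Suc j) * (\<Sum>i\<le>m. (of_nat (Suc i) * fps_nth G (Suc i)) * fps_nth (G^j) (m - i))"
proof -
  have "fps_nth (fps_deriv (G^Suc j)) m = fps_nth (fps_const (of_nat (Suc j)) * (fps_deriv G * G^j)) m"
    by (subst fps_deriv_power) (simp add: mult.assoc)
  also have "\<dots> = of_nat (Suc j) * (\<Sum>i=0..m. fps_nth (fps_deriv G) i * fps_nth (G^j) (m - i))"
    by (subst fps_mult_left_const_nth) (simp only: fps_mult_nth)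
  finally show ?thesis
    by (simp only: fps_deriv_nth atLeast0AtMost Suc_eq_plus1)
qed

lemma PW_fps:
  fixes a :: "nat \<Rightarrow> real"
  assumes U: "finite U" and a0: "a 0 = 0" and t: "\<And>j. t j = fact j * a j"
  shows "PW t U k * fact k = fact (card U) * fps_nth (Abs_fps a ^ k) (card U)"
  using U
proof (induction "card U" arbitrary: U k rule: less_induct)
  case less
  let ?G = "Abs_fps a"
  show ?case
  proof (cases "U = {}")
    case True
    then show ?thesis
    proof (cases k)
      case 0 then show ?thesis using True by (simp add: PW_zero)
    next
      case (Suc j) then show ?thesis using True a0
        by (simp add: PW_empty_Suc fps_nth_power_0 del: power_Suc)
    qed
  next
    case False
    then obtain x where x: "x \<in> U" by blast
    define U' where "U' = U - {x}"
    have UU: "U = insert x U'" "x \<notin> U'" "finite U'" using x less.prems U'_def by auto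
    define m where "m = card U'"
    have cU: "card U = Suc m" using UU m_def by simp
    show ?thesis
    proof (cases k)
      case 0 then show ?thesis using False less.prems cU by (simp add: PW_zero)
    next
      case (Suc j)
      have IH: "PW t (U' - S) j * fact j = fact (m - card S) * fps_nth (?G ^ j) (m - card S)"
        if "S \<subseteq> U'" for S
      proof -
        have "card (U' - S) < card U" using cU m_def UU(3) that
          by (metis card_Diff_subset card_mono diff_le_self finite_subset le_imp_less_Suc)
        then have "PW t (U' - S) j * fact j = fact (card (U' - S)) * fps_nth (?G ^ j) (card (U' - S))"
          using less.hyps[of "U' - S" j] UU(3) by blast
        moreover have "card (U' - S) = m - card S" using that UU(3) m_def
          by (meson card_Diff_subset finite_subset)
        ultimately show ?thesis by simp
      qed
      have "PW t U k * fact k = (\<Sum>S\<in>Pow U'. t (Suc (card S)) * PW t (U' - S) j) * (of_nat (Suc j) * fact j)"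
        using PW_insert[OF UU(3) UU(2)] UU(1) Suc by (simp add: fact_Suc)
      also have "\<dots> = of_nat (Suc j) * (\<Sum>S\<in>Pow U'. t (Suc (card S)) * (PW t (U' - S) j * fact j))"
        by (simp add: sum_distrib_left sum_distrib_right mult_ac)
      also have "\<dots> = of_nat (Suc j) * (\<Sum>S\<in>Pow U'. t (Suc (card S)) * (fact (m - card S) * fps_nth (?G ^ j) (m - card S)))"
        using IH by (auto intro!: sum.cong)
      also have "\<dots> = of_nat (Suc j) * (\<Sum>i\<le>m. of_nat (m choose i) * (t (Suc i) * (fact (m - i) * fps_nth (?G ^ j) (m - i))))"
        using sum_Pow_card[OF UU(3), of "\<lambda>i. t (Suc i) * (fact (m - i) * fps_nth (?G ^ j) (m - i))"] m_def by simp
      also have "\<dots> = of_nat (Suc j) * (\<Sum>i\<le>m. fact m * ((of_nat (Suc i) * fps_nth ?G (Suc i)) * fps_nth (?G ^ j) (m - i)))"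
      proof (intro arg_cong[where f = "\<lambda>x. _ * x"] sum.cong refl)
        fix i assume "i \<in> {..m}"
        then have le: "i \<le> m" by simp
        have f: "fact i * fact (m - i) * real (m choose i) = fact m"
          using binomial_fact_lemma[OF le] by (metis of_nat_fact of_nat_mult)
        have "of_nat (m choose i) * (t (Suc i) * (fact (m - i) * fps_nth (?G ^ j) (m - i)))
            = (fact i * fact (m - i) * real (m choose i)) * (of_nat (Suc i) * a (Suc i) * fps_nth (?G ^ j) (m - i))"
          by (simp add: t fact_Suc mult_ac)
        also have "\<dots> = fact m * ((of_nat (Suc i) * fps_nth ?G (Suc i)) * fps_nth (?G ^ j) (m - i))"
          using f by (simp add: mult_ac)
        finally show "of_nat (m choose i) * (t (Suc i) * (fact (m - i) * fps_nth (?G ^ j) (m - i)))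
            = fact m * ((of_nat (Suc i) * fps_nth ?G (Suc i)) * fps_nth (?G ^ j) (m - i))" .
      qed
      also have "\<dots> = fact m * (of_nat (Suc m) * fps_nth (?G ^ Suc j) (Suc m))"
        by (subst deriv_id) (simp add: sum_distrib_left mult_ac)
      also have "\<dots> = fact (card U) * fps_nth (?G ^ k) (card U)"
        using cU Suc by (simp add: fact_Suc mult_ac)
      finally show ?thesis .
    qed
  qed
qed

lemma ws_finite: "weighted_species S w T \<Longrightarrow> finite U \<Longrightarrow> finite (S U)"
  unfolding weighted_species_def by (elim conjE) simp

lemma ws_nonneg: "weighted_species S w T \<Longrightarrow> finite U \<Longrightarrow> x \<in> S U \<Longrightarrow> 0 \<le> w U x"
  unfolding weighted_species_def by (elim conjE) simp

lemma sum_species: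
  assumes S: "weighted_species S w T" and Q: "finite Q"
  shows "(\<Sum>x\<in>S Q. w Q x) = total_weight S w (card Q)"
proof -
  obtain \<sigma> where \<sigma>: "bij_betw \<sigma> Q {1..card Q}"
    using finite_same_card_bij[OF Q, of "{1..card Q}"] by auto
  have "\<forall>U V \<sigma>. finite U \<longrightarrow> bij_betw \<sigma> U V \<longrightarrow>
         bij_betw (T \<sigma> U) (S U) (S V) \<and> (\<forall>x\<in>S U. w V (T \<sigma> U x) = w U x)"
    using S unfolding weighted_species_def by (elim conjE) assumption
  then have b: "bij_betw (T \<sigma> Q) (S Q) (S {1..card Q})" and wq: "\<forall>x\<in>S Q. w {1..card Q} (T \<sigma> Q x) = w Q x"
    using Q \<sigma> by blast+
  have "total_weight S w (card Q) = (\<Sum>x\<in>S Q. w {1..card Q} (T \<sigma> Q x))"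
    unfolding total_weight_def by (rule sum.reindex_bij_betw[OF b, symmetric])
  also have "\<dots> = (\<Sum>x\<in>S Q. w Q x)" using wq by simp
  finally show ?thesis by simp
qed


lemma comp_structs_eq:
  "comp_structs SF SG n = Sigma {\<pi>. partition_on {1..n} \<pi>} (\<lambda>\<pi>. SF {1..card \<pi>} \<times> PiE \<pi> SG)"
  unfolding comp_structs_def by auto

lemma finite_comp_structs:
  assumes F: "weighted_species SF wF TF" and G: "weighted_species SG wG TG"
  shows "finite (comp_structs SF SG n)"
proof -
  have "finite (SF {1..card \<pi>} \<times> PiE \<pi> SG)" if "partition_on {1..n} \<pi>" for \<pi>
  proof -
    have "finite \<pi>" using finite_elements[OF _ that] by simp
    moreover have "finite (SG Q)" if "Q \<in> \<pi>" for Q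
    proof -
      have "Q \<subseteq> {1..n}" using partition_onD1[OF \<open>partition_on {1..n} \<pi>\<close>] that by blast
      then have "finite Q" by (rule finite_subset) simp
      then show ?thesis using ws_finite[OF G] by blast
    qed
    ultimately show ?thesis using ws_finite[OF F] by (auto intro!: finite_PiE)
  qed
  moreover have "finite {\<pi>. partition_on {1..n} \<pi>}" by (rule finitely_many_partition_on) simp
  ultimately show ?thesis unfolding comp_structs_eq
    using finite_SigmaI[of "{\<pi>. partition_on {1..n} \<pi>}" "\<lambda>\<pi>. SF {1..card \<pi>} \<times> PiE \<pi> SG"] by blast
qed


lemma comp_card_sum:
  assumes F: "weighted_species SF wF TF" and G: "weighted_species SG wG TG"
  shows "(\<Sum>s\<in>{s\<in>comp_structs SF SG n. card (fst s) = k}. comp_weight wF wG s)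
     = total_weight SF wF k * PW (total_weight SG wG) {1..n} k"
proof -
  have eq: "{s\<in>comp_structs SF SG n. card (fst s) = k} = Sigma (parts {1..n} k) (\<lambda>\<pi>. SF {1..card \<pi>} \<times> PiE \<pi> SG)"
    unfolding comp_structs_eq parts_def by (auto simp del: PiE_iff)
  have finQ: "finite Q" "finite (SG Q)" if "\<pi> \<in> parts {1..n} k" "Q \<in> \<pi>" for \<pi> Q
  proof -
    have "Q \<subseteq> {1..n}" using that partition_onD1 unfolding parts_def by blast
    then show "finite Q" by (rule finite_subset) simp
    then show "finite (SG Q)" using ws_finite[OF G] by blast
  qed
  have finpi: "finite \<pi>" if "\<pi> \<in> parts {1..n} k" for \<pi>
    using that finite_elements unfolding parts_def by blast
  have finF: "finite (SF {1..m})" for m using ws_finite[OF F] by blast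
  have finP: "finite (SF {1..card \<pi>} \<times> PiE \<pi> SG)" if "\<pi> \<in> parts {1..n} k" for \<pi>
    using finF finpi[OF that] finQ[OF that] by (simp add: finite_PiE)
  have "(\<Sum>s\<in>{s\<in>comp_structs SF SG n. card (fst s) = k}. comp_weight wF wG s)
      = (\<Sum>\<pi>\<in>parts {1..n} k. \<Sum>p\<in>SF {1..card \<pi>} \<times> PiE \<pi> SG. comp_weight wF wG (\<pi>, p))"
    unfolding eq
    using sum.Sigma[of "parts {1..n} k" "\<lambda>\<pi>. SF {1..card \<pi>} \<times> PiE \<pi> SG" "\<lambda>\<pi> p. comp_weight wF wG (\<pi>, p)"] finite_parts[of "{1..n}" k] finP by (simp add: case_prod_eta)
  also have "\<dots> = (\<Sum>\<pi>\<in>parts {1..n} k. total_weight SF wF k * (\<Prod>Q\<in>\<pi>. total_weight SG wG (card Q)))"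
  proof (rule sum.cong[OF refl])
    fix \<pi> assume pi: "\<pi> \<in> parts {1..n} k"
    then have ck: "card \<pi> = k" by (simp add: parts_def)
    have "(\<Sum>p\<in>SF {1..card \<pi>} \<times> PiE \<pi> SG. comp_weight wF wG (\<pi>, p))
        = (\<Sum>f\<in>SF {1..k}. \<Sum>g\<in>PiE \<pi> SG. wF {1..k} f * (\<Prod>Q\<in>\<pi>. wG Q (g Q)))"
      unfolding comp_weight_def by (simp add: sum.cartesian_product case_prod_beta ck)
    also have "\<dots> = (\<Sum>f\<in>SF {1..k}. wF {1..k} f) * (\<Sum>g\<in>PiE \<pi> SG. \<Prod>Q\<in>\<pi>. wG Q (g Q))"
      by (rule sum_product[symmetric])
    also have "(\<Sum>g\<in>PiE \<pi> SG. \<Prod>Q\<in>\<pi>. wG Q (g Q)) = (\<Prod>Q\<in>\<pi>. \<Sum>x\<in>SG Q. wG Q x)"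
      by (rule prod_sum_PiE[symmetric]) (auto simp: finpi[OF pi] finQ[OF pi])
    also have "\<dots> = (\<Prod>Q\<in>\<pi>. total_weight SG wG (card Q))"
      using sum_species[OF G] finQ[OF pi] by (auto intro!: prod.cong)
    finally show "(\<Sum>p\<in>SF {1..card \<pi>} \<times> PiE \<pi> SG. comp_weight wF wG (\<pi>, p))
        = total_weight SF wF k * (\<Prod>Q\<in>\<pi>. total_weight SG wG (card Q))"
      by (simp add: total_weight_def)
  qed
  also have "\<dots> = total_weight SF wF k * PW (total_weight SG wG) {1..n} k"
    by (simp add: PW_def sum_distrib_left)
  finally show ?thesis .
qed


lemma partition_card_le:
  assumes "partition_on A P" "finite A"
  shows "card P \<le> card A"
proof -
  have fp: "\<And>p. p \<in> P \<Longrightarrow> finite p" using assms partition_onD1 by (metis Union_upper finite_subset)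
  have "card A = (\<Sum>p\<in>P. card p)" using product_partition[OF assms(1) fp] .
  also have "\<dots> \<ge> (\<Sum>p\<in>P. 1)"
  proof (rule sum_mono)
    fix p assume "p \<in> P"
    then have "p \<noteq> {}" "finite p" using fp partition_onD3[OF assms(1)] by auto
    then show "1 \<le> card p" by (simp add: Suc_le_eq card_gt_0_iff)
  qed
  finally show ?thesis by simp
qed

lemma comp_total_sum:
  assumes F: "weighted_species SF wF TF" and G: "weighted_species SG wG TG"
  shows "(\<Sum>s\<in>comp_structs SF SG n. comp_weight wF wG s)
     = (\<Sum>k\<le>n. total_weight SF wF k * PW (total_weight SG wG) {1..n} k)"
proof -
  have "(\<Sum>s\<in>comp_structs SF SG n. comp_weight wF wG s)
      = (\<Sum>k\<le>n. \<Sum>s\<in>{s\<in>comp_structs SF SG n. card (fst s) = k}. comp_weight wF wG s)"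
  proof (rule sum.group[symmetric])
    show "finite (comp_structs SF SG n)" by (rule finite_comp_structs[OF F G])
    show "(\<lambda>s. card (fst s)) ` comp_structs SF SG n \<subseteq> {..n}"
    proof (rule image_subsetI)
      fix s assume "s \<in> comp_structs SF SG n"
      then have "partition_on {1..n} (fst s)" by (auto simp: comp_structs_def)
      from partition_card_le[OF this] show "card (fst s) \<in> {..n}" by simp
    qed
  qed simp
  then show ?thesis using comp_card_sum[OF F G] by simp
qed




function atl :: "(nat \<Rightarrow> real) \<Rightarrow> nat \<Rightarrow> real" where
  "atl a m = (if m = 0 then 0 else a m + (\<Sum>i\<in>{2..m}. a i * atl a (m+1-i)))"
  by auto
termination by (relation "Wellfounded.measure (\<lambda>(a,m). m)") auto

declare atl.simps[simp del]

lemma atl_0[simp]: "atl a 0 = 0" by (simp add: atl.simps)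

lemma atl_nonneg: assumes "\<And>i. 0 \<le> a i" shows "0 \<le> atl a m"
proof (induction m rule: less_induct)
  case (less m)
  show ?case
  proof (cases "m = 0")
    case False
    have "0 \<le> (\<Sum>i\<in>{2..m}. a i * atl a (m+1-i))"
      using less assms False by (intro sum_nonneg mult_nonneg_nonneg) auto
    then show ?thesis using False assms[of m] by (simp add: atl.simps[of a m])
  qed simp
qed

lemma atl_ge: assumes "a 0 = 0" "\<And>i. 0 \<le> a i" shows "a m \<le> atl a m"
proof (cases "m = 0")
  case False
  have "0 \<le> (\<Sum>i\<in>{2..m}. a i * atl a (m+1-i))"
    using atl_nonneg assms by (intro sum_nonneg mult_nonneg_nonneg) auto
  then show ?thesis using False by (simp add: atl.simps[of a m])
qed (simp add: assms)

lemma atl_R: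
  assumes a0: "a 0 = 0" and nn: "\<And>i. 0 \<le> a i" and n: "n \<ge> m + 1"
  shows "(\<Sum>i\<le>n. a i * atl a (m+1-i)) \<le> (a 1 + 1) * atl a m"
proof (cases "m = 0")
  case True
  have "(\<Sum>i\<le>n. a i * atl a (m+1-i)) = 0"
  proof (rule sum.neutral, clarify)
    fix i show "a i * atl a (m+1-i) = 0" using True a0 by (cases i) auto
  qed
  then show ?thesis using True by simp
next
  case False
  have "(\<Sum>i\<le>n. a i * atl a (m+1-i)) = (\<Sum>i\<in>{1..m}. a i * atl a (m+1-i))"
  proof (rule sum.mono_neutral_right)
    show "\<forall>i\<in>{..n} - {1..m}. a i * atl a (m + 1 - i) = 0"
    proof
      fix i assume "i \<in> {..n} - {1..m}"
      then have "i = 0 \<or> i > m" by auto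
      then show "a i * atl a (m + 1 - i) = 0" using a0 by (auto simp: Suc_diff_le)
    qed
  qed (use n in auto)
  also have "\<dots> = a 1 * atl a m + (\<Sum>i\<in>{2..m}. a i * atl a (m+1-i))"
    using False by (subst sum.atLeast_Suc_atMost) (auto simp: numeral_2_eq_2)
  also have "\<dots> \<le> a 1 * atl a m + atl a m"
    using False nn[of m] by (simp add: atl.simps[of a m])
  finally show ?thesis by (simp add: algebra_simps)
qed

definition Bc :: "(nat \<Rightarrow> real) \<Rightarrow> nat \<Rightarrow> nat \<Rightarrow> real" where
  "Bc a n k = fps_nth (Abs_fps a ^ k) n"

lemma Bc_Suc: "Bc a n (Suc k) = (\<Sum>i\<le>n. a i * Bc a (n-i) k)"
  unfolding Bc_def by (simp add: fps_mult_nth atLeast0AtMost)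

lemma Bc_0: "Bc a n 0 = (if n = 0 then 1 else 0)"
  unfolding Bc_def by simp

lemma Bc_1: "Bc a n 1 = a n"
  unfolding Bc_def by simp

lemma Bc_below: assumes a0: "a 0 = 0" shows "n < k \<Longrightarrow> Bc a n k = 0"
proof (induction k arbitrary: n)
  case 0 then show ?case by simp
next
  case (Suc k)
  have "a i * Bc a (n-i) k = 0" if "i \<le> n" for i
    using Suc that a0 by (cases i) auto
  then show ?case by (simp add: Bc_Suc sum.neutral)
qed

lemma Bc_nonneg: assumes "\<And>i. 0 \<le> a i" shows "0 \<le> Bc a n k"
proof (induction k arbitrary: n)
  case 0 then show ?case by (simp add: Bc_0)
next
  case (Suc k) then show ?case using assms by (simp add: Bc_Suc sum_nonneg)
qed

lemma Bc_bound:
  assumes a0: "a 0 = 0" and nn: "\<And>i. 0 \<le> a i" and k: "k \<ge> 1"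
  shows "Bc a n k \<le> (a 1 + 1)^(k-1) * atl a (n+1-k)"
  using k
proof (induction k arbitrary: n rule: dec_induct)
  case base
  then show ?case using atl_ge[of a, OF a0 nn] Bc_1[of a n] by simp
next
  case (step k)
  let ?D = "a 1 + 1"
  have D: "0 \<le> ?D" using nn[of 1] by simp
  show ?case
  proof (cases "n \<le> k")
    case True
    then have "Bc a n (Suc k) = 0" using Bc_below[of a, OF a0] by simp
    then show ?thesis using atl_nonneg[of a, OF nn] D by simp
  next
    case False
    define m where "m = n - k"
    have m: "n + 1 - k = m + 1" "n \<ge> m + 1" "n + 1 - Suc k = m" using False step(1) m_def by auto
    have "Bc a n (Suc k) = (\<Sum>i\<le>n. a i * Bc a (n-i) k)" by (rule Bc_Suc)
    also have "\<dots> \<le> (\<Sum>i\<le>n. a i * (?D^(k-1) * atl a (n - i + 1 - k)))"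
    proof (intro sum_mono mult_left_mono)
      fix i assume "i \<in> {..n}"
      then have "n - i + 1 - k = Suc (n - i) - k" by auto
      then show "Bc a (n - i) k \<le> ?D ^ (k - 1) * atl a (n - i + 1 - k)" using step(3)[of "n - i"] by simp
    qed (use nn in auto)
    also have "\<dots> = ?D^(k-1) * (\<Sum>i\<le>n. a i * atl a (m + 1 - i))"
    proof -
      have "n - i + 1 - k = m + 1 - i" if "i \<le> n" for i using that m by auto
      then show ?thesis by (auto simp: sum_distrib_left mult_ac intro!: sum.cong)
    qed
    also have "\<dots> \<le> ?D^(k-1) * (?D * atl a m)"
      using atl_R[of a, OF a0 nn m(2)] D by (intro mult_left_mono) auto
    also have "\<dots> = ?D^(Suc k - 1) * atl a (n + 1 - Suc k)"
      using m step(1) by (cases k) (auto simp: mult_ac)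
    finally show ?thesis .
  qed
qed

lemma mono_from:
  fixes a :: "nat \<Rightarrow> real"
  assumes "\<forall>m\<ge>J. a m \<le> a (Suc m)" "J \<le> i" "i \<le> j"
  shows "a i \<le> a j"
  using assms(3)
proof (induction j rule: dec_induct)
  case (step j)
  then show ?case using assms(1,2) by (meson order.trans)
qed simp

lemma sum_rev_shift:
  fixes h :: "nat \<Rightarrow> real"
  shows "(\<Sum>i\<in>{2..m}. h (m+1-i)) = (\<Sum>j\<in>{1..m-1}. h j)"
  by (rule sum.reindex_bij_witness[where i = "\<lambda>j. m+1-j" and j = "\<lambda>i. m+1-i"]) auto

lemma atl_le_E:
  fixes a :: "nat \<Rightarrow> real"
  assumes a0: "a 0 = 0" and nn: "\<And>i. 0 \<le> a i" and J: "J \<ge> 2"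
    and pos: "\<forall>m\<ge>J. a m > 0" and mono: "\<forall>m\<ge>J. a m \<le> a (Suc m)"
    and cs: "\<forall>m\<ge>J. (\<Sum>i\<in>{2..m-1}. a i * a (m+1-i)) \<le> a m / 2"
  shows "\<exists>E. \<forall>m\<ge>J. atl a m \<le> E * a m"
proof -
  define E0 where "E0 = (\<Sum>j<J. atl a j)"
  define E where "E = 2 * (1 + E0) + (\<Sum>m\<in>{J..2*J}. atl a m / a m)"
  have atn: "\<And>m. 0 \<le> atl a m" using atl_nonneg nn by blast
  have E0: "0 \<le> E0" unfolding E0_def using atn by (simp add: sum_nonneg)
  have Ege: "E \<ge> 2 * (1 + E0)" unfolding E_def
    using atn pos by (intro add_increasing2 sum_nonneg) (auto intro!: divide_nonneg_pos)
  have "atl a m \<le> E * a m" if "m \<ge> J" for m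
    using that
  proof (induction m rule: less_induct)
    case (less m)
    have am: "a m > 0" using pos less.prems by auto
    show ?case
    proof (cases "m \<le> 2 * J")
      case True
      have "atl a m / a m \<le> (\<Sum>m\<in>{J..2*J}. atl a m / a m)"
        using True less.prems atn pos by (intro member_le_sum) (auto intro!: divide_nonneg_pos)
      also have "\<dots> \<le> E" unfolding E_def using E0 by simp
      finally show ?thesis using am by (simp add: divide_le_eq)
    next
      case False
      define g1 where "g1 i = (if m+1-i < J then a m * atl a (m+1-i) else 0)" for i
      define g2 where "g2 i = (if m+1-i < J then 0 else E * (a i * a (m+1-i)))" for i
      have pt: "a i * atl a (m+1-i) \<le> g1 i + g2 i" if "i \<in> {2..m}" for i
      proof (cases "m+1-i < J")
        case True
        then have "J \<le> i" "i \<le> m" using that False by auto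
        then have "a i \<le> a m" using mono_from[OF mono] by blast
        then show ?thesis using True atn by (simp add: g1_def g2_def mult_right_mono)
      next
        case F2: False
        have "atl a (m+1-i) \<le> E * a (m+1-i)" using less.IH[of "m+1-i"] F2 that by auto
        then have "a i * atl a (m+1-i) \<le> a i * (E * a (m+1-i))" using nn by (intro mult_left_mono) auto
        then show ?thesis using F2 by (simp add: g1_def g2_def mult_ac)
      qed
      have s1: "(\<Sum>i\<in>{2..m}. g1 i) \<le> a m * E0"
      proof -
        have "(\<Sum>i\<in>{2..m}. g1 i) = a m * (\<Sum>i\<in>{2..m}. (\<lambda>j. if j < J then atl a j else 0) (m+1-i))"
          unfolding g1_def sum_distrib_left by (intro sum.cong) auto
        also have "(\<Sum>i\<in>{2..m}. (\<lambda>j. if j < J then atl a j else 0) (m+1-i)) = (\<Sum>j\<in>{1..m-1}. if j < J then atl a j else 0)"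
          by (rule sum_rev_shift)
        also have "\<dots> = (\<Sum>j\<in>{1..m-1} \<inter> {..<J}. atl a j)"
          by (simp add: sum.inter_restrict)
        also have "\<dots> \<le> E0" unfolding E0_def using atn by (intro sum_mono2) auto
        finally show ?thesis using am by (simp add: mult_left_mono)
      qed
      have s2: "(\<Sum>i\<in>{2..m}. g2 i) \<le> E * (a m / 2)"
      proof -
        have "(\<Sum>i\<in>{2..m}. g2 i) = (\<Sum>i\<in>{2..m-1}. g2 i)"
          using False J by (intro sum.mono_neutral_right) (auto simp: g2_def)
        also have "\<dots> \<le> (\<Sum>i\<in>{2..m-1}. E * (a i * a (m+1-i)))"
          using Ege E0 nn by (intro sum_mono) (auto simp: g2_def)
        also have "\<dots> = E * (\<Sum>i\<in>{2..m-1}. a i * a (m+1-i))" by (simp add: sum_distrib_left)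
        also have "\<dots> \<le> E * (a m / 2)"
          using cs less.prems Ege E0 by (intro mult_left_mono) auto
        finally show ?thesis .
      qed
      have "atl a m = a m + (\<Sum>i\<in>{2..m}. a i * atl a (m+1-i))"
        using less.prems J by (simp add: atl.simps[of a m])
      also have "\<dots> \<le> a m + ((\<Sum>i\<in>{2..m}. g1 i) + (\<Sum>i\<in>{2..m}. g2 i))"
        unfolding sum.distrib[symmetric] using pt by (intro add_left_mono sum_mono) auto
      also have "\<dots> \<le> a m + (a m * E0 + E * (a m / 2))" using s1 s2 by simp
      also have "\<dots> = (1 + E0 + E / 2) * a m" by (simp add: algebra_simps)
      also have "\<dots> \<le> E * a m" using Ege am by (intro mult_right_mono) auto
      finally show ?thesis .
    qed
  qed
  then show ?thesis by blast
qed

lemma decay: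
  fixes v c :: "nat \<Rightarrow> real"
  assumes c: "c \<longlonglongrightarrow> 0" and cnn: "\<forall>n. 0 \<le> c n" and vnn: "\<forall>n\<ge>N. 0 \<le> v n"
    and rec: "\<forall>n\<ge>N. v (Suc n) \<le> c n * (v n + E)" and E: "0 \<le> E"
  shows "v \<longlonglongrightarrow> 0"
proof -
  have "eventually (\<lambda>n. c n < 1/2) sequentially"
    using c by (rule order_tendstoD) simp
  then obtain N0 where N0: "\<forall>n\<ge>N0. c n < 1/2" by (auto simp: eventually_sequentially)
  define N1 where "N1 = max N N0"
  define B where "B = v N1 + E"
  have vN1: "0 \<le> v N1" using vnn N1_def by simp
  have bnd: "v n \<le> B" if "n \<ge> N1" for n
    using that
  proof (induction n rule: dec_induct)
    case base then show ?case using E by (simp add: B_def)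
  next
    case (step n)
    have "v (Suc n) \<le> c n * (v n + E)" using rec step N1_def by simp
    also have "\<dots> \<le> (1/2) * (B + E)"
      using N0 step N1_def cnn vnn E
      by (intro mult_mono) (auto simp: less_imp_le)
    also have "\<dots> \<le> B" using vN1 B_def by simp
    finally show ?case .
  qed
  have lim: "(\<lambda>n. c n * (B + E)) \<longlonglongrightarrow> 0"
    using tendsto_mult[OF c tendsto_const[of "B + E"]] by simp
  have "(\<lambda>n. v (Suc n)) \<longlonglongrightarrow> 0"
  proof (rule tendsto_sandwich[OF _ _ tendsto_const lim])
    show "eventually (\<lambda>n. 0 \<le> v (Suc n)) sequentially"
      using vnn by (auto simp: eventually_sequentially intro: exI[of _ N])
    show "eventually (\<lambda>n. v (Suc n) \<le> c n * (B + E)) sequentially"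
      unfolding eventually_sequentially
    proof (intro exI[of _ N1] allI impI)
      fix n assume n: "N1 \<le> n"
      have "v (Suc n) \<le> c n * (v n + E)" using rec n N1_def by simp
      also have "\<dots> \<le> c n * (B + E)" using bnd[OF n] cnn by (intro mult_left_mono) auto
      finally show "v (Suc n) \<le> c n * (B + E)" .
    qed
  qed
  then show ?thesis by (rule LIMSEQ_imp_Suc)
qed

lemma cs_le_conv:
  fixes a :: "nat \<Rightarrow> real"
  assumes nn: "\<And>i. 0 \<le> a i"
  shows "(\<Sum>i\<in>{2..M-2}. a i * a (M-i)) \<le>
    (\<Sum>c\<in>{c \<in> {..<2::nat} \<rightarrow>\<^sub>E {1..<M - (2 - 1)}. (\<Sum>j<2. c j) = M}. \<Prod>j<2. a (c j))"
proof -
  let ?S = "{c \<in> {..<2::nat} \<rightarrow>\<^sub>E {1..<M - (2 - 1)}. (\<Sum>j<2. c j) = M}"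
  define h where "h i = (\<lambda>j\<in>{..<2::nat}. if j = 0 then i else M - i)" for i
  have inj: "inj_on h {2..M-2}"
  proof (rule inj_onI)
    fix x y assume "h x = h y" then have "h x 0 = h y 0" by simp
    then show "x = y" by (simp add: h_def)
  qed
  have sub: "h ` {2..M-2} \<subseteq> ?S"
  proof
    fix c assume "c \<in> h ` {2..M-2}"
    then obtain i where i: "i \<in> {2..M-2}" "c = h i" by blast
    have "c \<in> {..<2::nat} \<rightarrow>\<^sub>E {1..<M - (2 - 1)}" using i by (auto simp: h_def PiE_def extensional_def)
    moreover have "(\<Sum>j<2. c j) = M" using i by (simp add: h_def numeral_2_eq_2) linarith
    ultimately show "c \<in> ?S" by simp
  qed
  have fin: "finite ?S" by (rule finite_subset[of _ "{..<2::nat} \<rightarrow>\<^sub>E {1..<M - (2 - 1)}"]) (auto intro: finite_PiE)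
  have "(\<Sum>i\<in>{2..M-2}. a i * a (M-i)) = (\<Sum>i\<in>{2..M-2}. \<Prod>j<2. a (h i j))"
    by (intro sum.cong refl) (simp add: h_def numeral_2_eq_2)
  also have "\<dots> = (\<Sum>c\<in>h ` {2..M-2}. \<Prod>j<2. a (c j))"
    by (rule sum.reindex[OF inj, symmetric, unfolded comp_def])
  also have "\<dots> \<le> (\<Sum>c\<in>?S. \<Prod>j<2. a (c j))"
    by (rule sum_mono2[OF fin sub]) (simp add: nn prod_nonneg)
  finally show ?thesis .
qed

lemma conv_bound:
  fixes f :: "nat \<Rightarrow> real"
  assumes "conv_radius f > 0"
  shows "\<exists>r C. r > 0 \<and> C > 0 \<and> (\<forall>k. \<bar>f k\<bar> \<le> C / r^k)"
proof -
  obtain r where r: "0 < ereal r" "ereal r < conv_radius f" using ereal_dense2[OF assms] by blast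
  have rp: "r > 0" using r by simp
  have "summable (\<lambda>n. f n * r^n)" using r rp by (intro summable_in_conv_radius) simp
  then have "(\<lambda>n. f n * r^n) \<longlonglongrightarrow> 0" by (rule summable_LIMSEQ_zero)
  then have "Bseq (\<lambda>n. f n * r^n)" by (intro convergent_imp_Bseq) (auto simp: convergent_def)
  then obtain K where K: "K > 0" "\<forall>n. norm (f n * r^n) \<le> K" by (rule BseqE)
  have "\<bar>f k\<bar> \<le> K / r^k" for k
    using K(2)[rule_format, of k] rp by (simp add: abs_mult pos_le_divide_eq)
  then show ?thesis using rp K by blast
qed

lemma sum_atMost_split2:
  fixes g :: "nat \<Rightarrow> real"
  assumes "n \<ge> 1"
  shows "(\<Sum>k\<le>n. g k) = g 0 + g 1 + (\<Sum>k\<in>{2..n}. g k)"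
proof -
  have "{..n} = insert 0 (insert 1 {2..n})" using assms by auto
  then show ?thesis by simp
qed

theorem mainTheorem10:
  fixes SF :: "nat set \<Rightarrow> 'b set" and wF :: "nat set \<Rightarrow> 'b \<Rightarrow> real"
    and TF :: "(nat \<Rightarrow> nat) \<Rightarrow> nat set \<Rightarrow> 'b \<Rightarrow> 'b"
    and SG :: "nat set \<Rightarrow> 'c set" and wG :: "nat set \<Rightarrow> 'c \<Rightarrow> real"
    and TG :: "(nat \<Rightarrow> nat) \<Rightarrow> nat set \<Rightarrow> 'c \<Rightarrow> 'c"
    and a :: "nat \<Rightarrow> real" and d I :: nat
  assumes F: "weighted_species SF wF TF"
    and G: "weighted_species SG wG TG"
    and G_empty: "SG {} = {}"
    and a_def: "\<And>i. a i = egf_coeff SG wG i"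
    and G_rad: "conv_radius a = 0"
    and F_rad: "conv_radius (egf_coeff SF wF) > 0"
    and d_pos: "d \<ge> 1"
    and a_zero: "\<And>i. i mod d \<noteq> 1 mod d \<Longrightarrow> a i = 0"
    and a_pos: "\<And>i. i \<ge> I \<Longrightarrow> i mod d = 1 mod d \<Longrightarrow> a i > 0"
    and conv: "\<And>k. k \<ge> 2 \<Longrightarrow>
        (\<lambda>n. \<Sum>c\<in>{c \<in> {..<k} \<rightarrow>\<^sub>E {1..<n - (k - 1)}. (\<Sum>j<k. c j) = n}. \<Prod>j<k. a (c j))
          \<in> o(\<lambda>n. a (n - (k - 1)))"
    and F1: "egf_coeff SF wF 1 > 0"
    and a1: "a 1 > 0" and a2: "a 2 > 0"
  shows "(\<lambda>n. prob_single_component SF wF SG wG n) \<longlonglongrightarrow> 1"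
proof -
  define t where "t = total_weight SG wG"
  define f where "f = egf_coeff SF wF"
  have finG: "\<And>U. finite U \<Longrightarrow> finite (SG U)" using ws_finite[OF G] by blast
  have a_t: "t j = fact j * a j" for j by (simp add: t_def a_def egf_coeff_def)
  have a0: "a 0 = 0" by (simp add: a_def egf_coeff_def total_weight_def G_empty)
  have nn: "0 \<le> a i" for i
    unfolding a_def egf_coeff_def total_weight_def
    using ws_nonneg[OF G] by (intro divide_nonneg_pos sum_nonneg) auto
  have fnn: "0 \<le> f k" for k
    unfolding f_def egf_coeff_def total_weight_def
    using ws_nonneg[OF F] by (intro divide_nonneg_pos sum_nonneg) auto
  have d1: "d = 1"
  proof (rule ccontr)
    assume "d \<noteq> 1"
    then have "d \<ge> 2" using d_pos by simp
    then have "2 mod d \<noteq> 1 mod d"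
      by (cases "d = 2") auto
    then have "a 2 = 0" using a_zero by blast
    then show False using a2 by simp
  qed
  have apos: "\<And>i. i \<ge> I \<Longrightarrow> a i > 0" using a_pos d1 by simp
  define cs where "cs M = (\<Sum>i\<in>{2..M-2}. a i * a (M-i))" for M
  have csnn: "0 \<le> cs M" for M unfolding cs_def using nn by (simp add: sum_nonneg)
  have cs_small: "eventually (\<lambda>M. cs M \<le> \<eta> * a (M - 1)) sequentially" if "\<eta> > 0" for \<eta>
  proof -
    have "eventually (\<lambda>n. norm (\<Sum>c\<in>{c \<in> {..<2::nat} \<rightarrow>\<^sub>E {1..<n - (2 - 1)}. (\<Sum>j<2. c j) = n}. \<Prod>j<2. a (c j))
            \<le> \<eta> * norm (a (n - (2 - 1)))) sequentially"
      using landau_o.smallD[OF conv[of 2] that] by simp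
    then show ?thesis
    proof (rule eventually_mono)
      fix M assume h: "norm (\<Sum>c\<in>{c \<in> {..<2::nat} \<rightarrow>\<^sub>E {1..<M - (2 - 1)}. (\<Sum>j<2. c j) = M}. \<Prod>j<2. a (c j))
            \<le> \<eta> * norm (a (M - (2 - 1)))"
      have "cs M \<le> (\<Sum>c\<in>{c \<in> {..<2::nat} \<rightarrow>\<^sub>E {1..<M - (2 - 1)}. (\<Sum>j<2. c j) = M}. \<Prod>j<2. a (c j))"
        unfolding cs_def by (rule cs_le_conv[OF nn])
      also have "\<dots> \<le> \<eta> * a (M - 1)" using h nn by simp
      finally show "cs M \<le> \<eta> * a (M - 1)" .
    qed
  qed
  define \<rho> where "\<rho> n = a n / a (Suc n)" for n
  have \<rho>nn: "0 \<le> \<rho> n" for n unfolding \<rho>_def using nn by simp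
  have cs2: "a 2 * a n \<le> cs (n + 2)" if "n \<ge> 2" for n
  proof -
    have "a 2 * a (n + 2 - 2) \<le> cs (n + 2)" unfolding cs_def
      using that nn by (intro member_le_sum[of 2 "{2..n+2-2}" "\<lambda>i. a i * a (n + 2 - i)"]) (auto intro: mult_nonneg_nonneg)
    then show ?thesis by simp
  qed
  have \<rho>0: "\<rho> \<longlonglongrightarrow> 0"
  proof (rule tendstoI)
    fix \<eta> :: real assume \<eta>: "\<eta> > 0"
    have "eventually (\<lambda>M. cs M \<le> (\<eta> * a 2 / 2) * a (M - 1)) sequentially"
      using cs_small[of "\<eta> * a 2 / 2"] \<eta> a2 by simp
    then have "eventually (\<lambda>n. cs (n + 2) \<le> (\<eta> * a 2 / 2) * a (n + 2 - 1)) sequentially"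
      by (subst eventually_sequentially_seg)
    moreover have "eventually (\<lambda>n. n \<ge> max I 2) sequentially" by (rule eventually_ge_at_top)
    ultimately show "eventually (\<lambda>n. dist (\<rho> n) 0 < \<eta>) sequentially"
    proof eventually_elim
      case (elim n)
      have pos: "a (Suc n) > 0" using apos elim(2) by simp
      have "a 2 * a n \<le> (\<eta> * a 2 / 2) * a (Suc n)" using cs2[of n] elim by simp
      then have "a n \<le> (\<eta> / 2) * a (Suc n)" using a2 by (simp add: field_simps)
      then have "\<rho> n \<le> \<eta> / 2" unfolding \<rho>_def using pos by (simp add: divide_le_eq)
      then show ?case using \<rho>nn[of n] \<eta> by simp
    qed
  qed
  have f1: "f 1 > 0" using F1 by (simp add: f_def)
  have a1': "a 1 > 0" using a1 .
  have ev1: "eventually (\<lambda>m. m \<ge> max I 2) sequentially" by (rule eventually_ge_at_top)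
  have ev2: "eventually (\<lambda>m. \<rho> m < 1) sequentially" using \<rho>0 by (rule order_tendstoD) simp
  have ev3: "eventually (\<lambda>m. cs (m + 1) \<le> (1/2) * a (m + 1 - 1)) sequentially"
    using cs_small[of "1/2"] by (subst eventually_sequentially_seg) simp
  obtain J where J: "\<forall>m\<ge>J. m \<ge> max I 2 \<and> \<rho> m < 1 \<and> cs (m + 1) \<le> (1/2) * a (m + 1 - 1)"
    using eventually_conj[OF ev1 eventually_conj[OF ev2 ev3]] unfolding eventually_sequentially by blast
  have J2: "J \<ge> 2" and JI: "J \<ge> I" using J by auto
  have Jpos: "\<forall>m\<ge>J. a m > 0" using J apos by auto
  have Jmono: "\<forall>m\<ge>J. a m \<le> a (Suc m)"
  proof (intro allI impI)
    fix m assume m: "m \<ge> J"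
    then have "\<rho> m < 1" "a (Suc m) > 0" using J Jpos by auto
    then show "a m \<le> a (Suc m)" unfolding \<rho>_def by (simp add: divide_less_eq)
  qed
  have Jcs: "\<forall>m\<ge>J. (\<Sum>i\<in>{2..m-1}. a i * a (m+1-i)) \<le> a m / 2"
  proof (intro allI impI)
    fix m assume m: "m \<ge> J"
    then have "cs (m + 1) \<le> (1/2) * a m" using J by auto
    moreover have "cs (m + 1) = (\<Sum>i\<in>{2..m-1}. a i * a (m+1-i))" unfolding cs_def
      using m J2 by (intro sum.cong) auto
    ultimately show "(\<Sum>i\<in>{2..m-1}. a i * a (m+1-i)) \<le> a m / 2" by simp
  qed
  obtain E where E: "\<forall>m\<ge>J. atl a m \<le> E * a m"
    using atl_le_E[of a J, OF a0 nn J2 Jpos Jmono Jcs] by blast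
  have E0: "E \<ge> 0"
  proof -
    have "a J \<le> atl a J" by (rule atl_ge[of a, OF a0 nn])
    also have "\<dots> \<le> E * a J" using E by simp
    finally have "1 * a J \<le> E * a J" by simp
    then have "1 \<le> E" using Jpos mult_right_le_imp_le[of 1 "a J" E] by auto
    then show ?thesis by simp
  qed
  obtain r C where rC: "r > 0" "C > 0" "\<forall>k. \<bar>f k\<bar> \<le> C / r^k"
    using conv_bound[OF F_rad] unfolding f_def by blast
  define D where "D = a 1 + 1"
  have D: "D > 0" using a1 by (simp add: D_def)
  define Q where "Q = D / r"
  have Q: "Q > 0" using D rC by (simp add: Q_def)
  define V where "V n = (\<Sum>j<n. Q^(n-j) * atl a j)" for n
  define Y where "Y n = (\<Sum>k\<in>{2..n}. f k * Bc a n k)" for n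
  have atn: "0 \<le> atl a j" for j using atl_nonneg[of a] nn by blast
  have Vnn: "0 \<le> V n" for n unfolding V_def using Q atn by (simp add: sum_nonneg)
  have Ynn: "0 \<le> Y n" for n unfolding Y_def using fnn Bc_nonneg[of a] nn by (simp add: sum_nonneg)
  have Ybnd: "Y n \<le> (C / r) * V n" for n
  proof -
    have "Y n \<le> (\<Sum>k\<in>{2..n}. (C / r) * (Q^(k-1) * atl a (n+1-k)))"
      unfolding Y_def
    proof (rule sum_mono)
      fix k assume k: "k \<in> {2..n}"
      have "f k * Bc a n k \<le> (C / r^k) * Bc a n k"
        using rC(3)[rule_format, of k] Bc_nonneg[of a] nn by (intro mult_right_mono) auto
      also have "\<dots> \<le> (C / r^k) * (D^(k-1) * atl a (n+1-k))"
        using Bc_bound[of a, OF a0 nn, of k n] k rC unfolding D_def by (intro mult_left_mono) auto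
      also have "\<dots> = (C / r) * (Q^(k-1) * atl a (n+1-k))"
      proof -
        have "r^k = r * r^(k-1)" using k by (cases k) auto
        then show ?thesis unfolding Q_def using rC by (simp add: power_divide)
      qed
      finally show "f k * Bc a n k \<le> (C / r) * (Q^(k-1) * atl a (n+1-k))" .
    qed
    also have "\<dots> = (C / r) * (\<Sum>k\<in>{2..n}. Q^(k-1) * atl a (n+1-k))" by (simp add: sum_distrib_left)
    also have "(\<Sum>k\<in>{2..n}. Q^(k-1) * atl a (n+1-k)) = (\<Sum>j\<in>{1..n-1}. Q^(n-j) * atl a j)"
      by (rule sum.reindex_bij_witness[where i = "\<lambda>j. n+1-j" and j = "\<lambda>k. n+1-k"]) auto
    finally have Y1: "Y n \<le> (C / r) * (\<Sum>j\<in>{1..n-1}. Q^(n-j) * atl a j)" .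
    have "(\<Sum>j\<in>{1..n-1}. Q^(n-j) * atl a j) \<le> V n" unfolding V_def using Q atn by (intro sum_mono2) auto
    then have "(C / r) * (\<Sum>j\<in>{1..n-1}. Q^(n-j) * atl a j) \<le> (C / r) * V n"
      using rC by (intro mult_left_mono) auto
    with Y1 show ?thesis by linarith
  qed
  have Vrec: "V (Suc n) = Q * (V n + atl a n)" for n
  proof -
    have "V (Suc n) = (\<Sum>j<n. Q^(Suc n - j) * atl a j) + Q * atl a n"
      unfolding V_def by simp
    also have "(\<Sum>j<n. Q^(Suc n - j) * atl a j) = Q * V n"
      unfolding V_def sum_distrib_left by (intro sum.cong) (auto simp: Suc_diff_le)
    finally show ?thesis by (simp add: algebra_simps)
  qed
  define v where "v n = V n / a n" for n
  have v0: "v \<longlonglongrightarrow> 0"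
  proof (rule decay[where c = "\<lambda>n. Q * \<rho> n" and N = J and E = E])
    show "(\<lambda>n. Q * \<rho> n) \<longlonglongrightarrow> 0" using tendsto_mult_right_zero[OF \<rho>0, of Q] by simp
    show "\<forall>n. 0 \<le> Q * \<rho> n" using Q \<rho>nn by simp
    show "\<forall>n\<ge>J. 0 \<le> v n" unfolding v_def using Vnn nn by (simp add: divide_nonneg_nonneg)
    show "0 \<le> E" by (rule E0)
    show "\<forall>n\<ge>J. v (Suc n) \<le> Q * \<rho> n * (v n + E)"
    proof (intro allI impI)
      fix n assume n: "n \<ge> J"
      have an: "a n > 0" "a (Suc n) > 0" using Jpos n by auto
      have "v (Suc n) = Q * \<rho> n * (v n + atl a n / a n)"
        unfolding v_def \<rho>_def Vrec using an by (simp add: field_simps)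
      also have "\<dots> \<le> Q * \<rho> n * (v n + E)"
        using E n an Q \<rho>nn[of n] by (intro mult_left_mono add_left_mono) (auto simp: divide_le_eq)
      finally show "v (Suc n) \<le> Q * \<rho> n * (v n + E)" .
    qed
  qed
  have ratio: "(\<lambda>n. Y n / (f 1 * a n)) \<longlonglongrightarrow> 0"
  proof (rule tendsto_sandwich[where f = "\<lambda>_. 0" and h = "\<lambda>n. (C / r / f 1) * v n"])
    show "eventually (\<lambda>n. 0 \<le> Y n / (f 1 * a n)) sequentially"
      using Ynn f1 nn by (auto intro!: divide_nonneg_nonneg)
    show "eventually (\<lambda>n. Y n / (f 1 * a n) \<le> (C / r / f 1) * v n) sequentially"
      unfolding eventually_sequentially
    proof (intro exI[of _ J] allI impI)
      fix n assume n: "n \<ge> J"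
      have an: "a n > 0" using Jpos n by auto
      show "Y n / (f 1 * a n) \<le> (C / r / f 1) * v n"
        using Ybnd[of n] an f1 unfolding v_def by (simp add: field_simps)
    qed
    show "(\<lambda>n. (C / r / f 1) * v n) \<longlonglongrightarrow> 0" by (rule tendsto_mult_right_zero[OF v0])
  qed simp
  have PWeq: "PW t {1..n} k = fact n * Bc a n k / fact k" for n k
    using PW_fps[of "{1..n}" a t k, OF _ a0 a_t] unfolding Bc_def by (simp add: field_simps)
  have tF: "total_weight SF wF k = f k * fact k" for k by (simp add: f_def egf_coeff_def)
  have termk: "total_weight SF wF k * PW t {1..n} k = fact n * (f k * Bc a n k)" for n k
    unfolding tF PWeq by simp
  have probeq: "prob_single_component SF wF SG wG n = 1 / (1 + Y n / (f 1 * a n))" if n: "n \<ge> J" for n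
  proof -
    have an: "a n > 0" using Jpos n by auto
    have n1: "n \<ge> 1" using n J2 by simp
    have num: "(\<Sum>s\<in>{s\<in>comp_structs SF SG n. card (fst s) = 1}. comp_weight wF wG s) = fact n * (f 1 * a n)"
      using comp_card_sum[OF F G, of n 1] termk[of 1 n] Bc_1[of a n] by (simp add: t_def)
    have den: "(\<Sum>s\<in>comp_structs SF SG n. comp_weight wF wG s) = fact n * (f 1 * a n + Y n)"
    proof -
      have "(\<Sum>s\<in>comp_structs SF SG n. comp_weight wF wG s) = (\<Sum>k\<le>n. fact n * (f k * Bc a n k))"
        using comp_total_sum[OF F G, of n] termk by (simp add: t_def)
      also have "\<dots> = fact n * (\<Sum>k\<le>n. f k * Bc a n k)" by (simp add: sum_distrib_left)
      also have "(\<Sum>k\<le>n. f k * Bc a n k) = f 0 * Bc a n 0 + f 1 * Bc a n 1 + Y n"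
        unfolding Y_def by (rule sum_atMost_split2[OF n1])
      also have "\<dots> = f 1 * a n + Y n" using n1 Bc_1[of a n] by (simp add: Bc_0)
      finally show ?thesis .
    qed
    have "prob_single_component SF wF SG wG n = (f 1 * a n) / (f 1 * a n + Y n)"
      unfolding prob_single_component_def num den by simp
    also have "\<dots> = 1 / (1 + Y n / (f 1 * a n))" using an f1 by (simp add: field_simps)
    finally show ?thesis .
  qed
  have "(\<lambda>n. 1 / (1 + Y n / (f 1 * a n))) \<longlonglongrightarrow> 1 / (1 + 0)"
    by (intro tendsto_intros ratio) simp
  then have lim: "(\<lambda>n. 1 / (1 + Y n / (f 1 * a n))) \<longlonglongrightarrow> 1" by simp
  show ?thesis
    by (rule Lim_transform_eventually[OF lim]) (auto simp: eventually_sequentially probeq intro: exI[of _ J])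
qed


end
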